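(* Let $\mathbb F$ be algebraically closed with $\operatorname{char}\mathbb F\neq 2$. For any $a,b,c\in\mathbb F$ and $d\in\mathbb N$ there exists a $(d+1)$-dimensional $\Re$-module with an $\mathbb F$-basis $v_0,\dots,v_d$ such that $Av_i=\theta_iv_i+v_{i+1}$ (with $v_{d+1}=0$) and $Bv_i=\theta_i^*v_i+\varphi_iv_{i-1}$ (with $v_{-1}=0$) for $0\le i\le d$, and on which $\alpha,\beta,\delta$ act as scalar multiplication by $(c-b)(c+b+1)(a-\tfrac d2)(a+\tfrac d2+1)$, $(a-c)(a+c+1)(b-\tfrac d2)(b+\tfrac d2+1)$, and $\tfrac d2(\tfrac d2+1)+a(a+1)+b(b+1)+c(c+1)$, respectively.
   Context: The Racah algebra $\Re$ is the unital associative $\mathbb F$-algebra with generators $A,B,C,D$ and relations $[A,B]=[B,C]=[C,A]=2D$ together with the requirement that each of $\alpha:=[A,D]+AC-BA$, $\beta:=[B,D]+BA-CB$, $\gamma:=[C,D]+CB-AC$ is central in $\Re$; $\delta:=A+B+C$. Here $\theta_i=(a+\tfrac d2-i)(a+\tfrac d2-i+1)$, $\theta_i^*=(b+\tfrac d2-i)(b+\tfrac d2-i+1)$, $\varphi_i=i(i-d-1)(a+b+c+\tfrac d2-i+2)(a+b-c+\tfrac d2-i+1)$. *)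

theory Defs
  imports "Jordan_Normal_Form.Matrix" "HOL-Computational_Algebra.Polynomial"
begin

definition alg_closed_field :: "'a::field itself \<Rightarrow> bool" where
  "alg_closed_field _ \<longleftrightarrow> (\<forall>p :: 'a poly. degree p \<ge> 1 \<longrightarrow> (\<exists>x. poly p x = 0))"

definition mcomm :: "'a::comm_ring mat \<Rightarrow> 'a mat \<Rightarrow> 'a mat" where
  "mcomm X Y = X * Y - Y * X"

definition racah_alpha :: "'a::comm_ring mat \<Rightarrow> 'a mat \<Rightarrow> 'a mat \<Rightarrow> 'a mat \<Rightarrow> 'a mat" where
  "racah_alpha A B C D = mcomm A D + A * C - B * A"
definition racah_beta :: "'a::comm_ring mat \<Rightarrow> 'a mat \<Rightarrow> 'a mat \<Rightarrow> 'a mat \<Rightarrow> 'a mat" where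
  "racah_beta A B C D = mcomm B D + B * A - C * B"
definition racah_gamma :: "'a::comm_ring mat \<Rightarrow> 'a mat \<Rightarrow> 'a mat \<Rightarrow> 'a mat \<Rightarrow> 'a mat" where
  "racah_gamma A B C D = mcomm C D + C * B - A * C"

text \<open>Matrices of the generators A, B, C, D acting on F^n (w.r.t. a fixed basis)
  that define a module of the Racah algebra: the defining relations hold and the
  images of alpha, beta, gamma commute with the images of all generators
  (hence with the image of the whole algebra).\<close>
definition racah_module :: "nat \<Rightarrow> 'a::comm_ring_1 mat \<Rightarrow> 'a mat \<Rightarrow> 'a mat \<Rightarrow> 'a mat \<Rightarrow> bool" where
  "racah_module n A B C D \<longleftrightarrow>
     A \<in> carrier_mat n n \<and> B \<in> carrier_mat n n \<and> C \<in> carrier_mat n n \<and> D \<in> carrier_mat n n \<and>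
     mcomm A B = 2 \<cdot>\<^sub>m D \<and> mcomm B C = 2 \<cdot>\<^sub>m D \<and> mcomm C A = 2 \<cdot>\<^sub>m D \<and>
     (\<forall>Z \<in> {racah_alpha A B C D, racah_beta A B C D, racah_gamma A B C D}.
        \<forall>X \<in> {A, B, C, D}. Z * X = X * Z)"

definition theta :: "'a::field \<Rightarrow> nat \<Rightarrow> nat \<Rightarrow> 'a" where
  "theta a d i = (a + of_nat d / 2 - of_nat i) * (a + of_nat d / 2 - of_nat i + 1)"

definition phi :: "'a::field \<Rightarrow> 'a \<Rightarrow> 'a \<Rightarrow> nat \<Rightarrow> nat \<Rightarrow> 'a" where
  "phi a b c d i = of_nat i * (of_nat i - of_nat d - 1)
     * (a + b + c + of_nat d / 2 - of_nat i + 2) * (a + b - c + of_nat d / 2 - of_nat i + 1)"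

end

theory Submission imports Defs begin

definition fA :: "'a::field \<Rightarrow> nat \<Rightarrow> nat \<times> nat \<Rightarrow> 'a" where
  "fA a d = (\<lambda>(r,s). if r = s then theta a d s else if r = Suc s then 1 else 0)"
definition fB :: "'a::field \<Rightarrow> 'a \<Rightarrow> 'a \<Rightarrow> nat \<Rightarrow> nat \<times> nat \<Rightarrow> 'a" where
  "fB a b c d = (\<lambda>(r,s). if r = s then theta b d s else if s = Suc r then phi a b c d s else 0)"

lemma mat_mult_left:
  assumes "M \<in> carrier_mat n m" "r < n" "s < m"
  shows "(mat n n f * M) $$ (r,s) = (\<Sum>k<n. f (r,k) * M $$ (k,s))"
  using assms by (simp add: scalar_prod_def lessThan_atLeast0)

lemma mat_mult_right:
  assumes "M \<in> carrier_mat m n" "r < m" "s < n"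
  shows "(M * mat n n f) $$ (r,s) = (\<Sum>k<n. M $$ (r,k) * f (k,s))"
  using assms by (simp add: scalar_prod_def lessThan_atLeast0)

lemma sum_prev: "r < n \<Longrightarrow> (\<Sum>k<n. if r = Suc k then g k else 0) = (if 0 < r then g (r - 1) else (0::'a::comm_monoid_add))"
proof -
  assume r: "r < n"
  have "(\<Sum>k<n. if r = Suc k then g k else 0) = (\<Sum>k<n. if k = r - 1 \<and> 0 < r then g k else 0)"
    by (rule sum.cong) auto
  also have "\<dots> = (if 0 < r then g (r - 1) else 0)"
    using r by (simp add: sum.If_cases)
  finally show ?thesis .
qed

lemma sum_next: "r < n \<Longrightarrow> (\<Sum>k<n. if k = Suc r then g k else 0) = (if Suc r < n then g (Suc r) else (0::'a::comm_monoid_add))"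
  by (simp add: sum.delta')

lemma A_left:
  assumes "M \<in> carrier_mat (Suc d) (Suc d)" "r < Suc d" "s < Suc d"
  shows "(mat (Suc d) (Suc d) (fA a d) * M) $$ (r,s) = theta a d r * M $$ (r,s) + (if 0 < r then M $$ (r-1,s) else 0)"
proof -
  have "(mat (Suc d) (Suc d) (fA a d) * M) $$ (r,s) = (\<Sum>k<Suc d. (if k = r then theta a d r * M $$ (r,s) else 0) + (if r = Suc k then M $$ (k,s) else 0))"
    by (subst mat_mult_left[OF assms]) (rule sum.cong, auto simp: fA_def)
  also have "\<dots> = theta a d r * M $$ (r,s) + (if 0 < r then M $$ (r-1,s) else 0)"
    unfolding sum.distrib sum_prev[OF assms(2)] using assms by (simp del: sum.lessThan_Suc)
  finally show ?thesis .
qed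

lemma B_left:
  assumes "M \<in> carrier_mat (Suc d) (Suc d)" "r < Suc d" "s < Suc d"
  shows "(mat (Suc d) (Suc d) (fB a b c d) * M) $$ (r,s) = theta b d r * M $$ (r,s) + (if r < d then phi a b c d (Suc r) * M $$ (Suc r,s) else 0)"
proof -
  have "(mat (Suc d) (Suc d) (fB a b c d) * M) $$ (r,s) = (\<Sum>k<Suc d. (if k = r then theta b d r * M $$ (r,s) else 0) + (if k = Suc r then phi a b c d k * M $$ (k,s) else 0))"
    by (subst mat_mult_left[OF assms]) (rule sum.cong, auto simp: fB_def)
  also have "\<dots> = theta b d r * M $$ (r,s) + (if r < d then phi a b c d (Suc r) * M $$ (Suc r,s) else 0)"
    unfolding sum.distrib sum_next[OF assms(2)] using assms by (simp del: sum.lessThan_Suc)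
  finally show ?thesis .
qed

lemma A_right:
  assumes "M \<in> carrier_mat (Suc d) (Suc d)" "r < Suc d" "s < Suc d"
  shows "(M * mat (Suc d) (Suc d) (fA a d)) $$ (r,s) = M $$ (r,s) * theta a d s + (if s < d then M $$ (r, Suc s) else 0)"
proof -
  have "(M * mat (Suc d) (Suc d) (fA a d)) $$ (r,s) = (\<Sum>k<Suc d. (if k = s then M $$ (r,s) * theta a d s else 0) + (if k = Suc s then M $$ (r,k) else 0))"
    by (subst mat_mult_right[OF assms]) (rule sum.cong, auto simp: fA_def)
  also have "\<dots> = M $$ (r,s) * theta a d s + (if s < d then M $$ (r, Suc s) else 0)"
    unfolding sum.distrib sum_next[OF assms(3)] using assms by (simp del: sum.lessThan_Suc)
  finally show ?thesis .
qed

lemma B_right: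
  assumes "M \<in> carrier_mat (Suc d) (Suc d)" "r < Suc d" "s < Suc d"
  shows "(M * mat (Suc d) (Suc d) (fB a b c d)) $$ (r,s) = M $$ (r,s) * theta b d s + (if 0 < s then phi a b c d s * M $$ (r, s - 1) else 0)"
proof -
  have "(M * mat (Suc d) (Suc d) (fB a b c d)) $$ (r,s) = (\<Sum>k<Suc d. (if k = s then M $$ (r,s) * theta b d s else 0) + (if s = Suc k then phi a b c d s * M $$ (r,k) else 0))"
    by (subst mat_mult_right[OF assms]) (rule sum.cong, auto simp: fB_def)
  also have "\<dots> = M $$ (r,s) * theta b d s + (if 0 < s then phi a b c d s * M $$ (r, s - 1) else 0)"
    unfolding sum.distrib sum_prev[OF assms(3)] using assms by (simp del: sum.lessThan_Suc)
  finally show ?thesis .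
qed

definition delta :: "'a::field \<Rightarrow> 'a \<Rightarrow> 'a \<Rightarrow> nat \<Rightarrow> 'a" where
  "delta a b c d = of_nat d / 2 * (of_nat d / 2 + 1) + a * (a + 1) + b * (b + 1) + c * (c + 1)"

definition fC :: "'a::field \<Rightarrow> 'a \<Rightarrow> 'a \<Rightarrow> nat \<Rightarrow> nat \<times> nat \<Rightarrow> 'a" where
  "fC a b c d = (\<lambda>(r,s). (if r = s then delta a b c d else 0) - fA a d (r,s) - fB a b c d (r,s))"

lemma C_left:
  assumes "M \<in> carrier_mat (Suc d) (Suc d)" "r < Suc d" "s < Suc d"
  shows "(mat (Suc d) (Suc d) (fC a b c d) * M) $$ (r,s) = delta a b c d * M $$ (r,s)
     - (mat (Suc d) (Suc d) (fA a d) * M) $$ (r,s) - (mat (Suc d) (Suc d) (fB a b c d) * M) $$ (r,s)"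
  unfolding mat_mult_left[OF assms] using assms
  by (simp add: fC_def sum_subtractf left_diff_distrib if_distrib[of "\<lambda>x. x * _"] sum.delta' del: sum.lessThan_Suc)

lemma C_right:
  assumes "M \<in> carrier_mat (Suc d) (Suc d)" "r < Suc d" "s < Suc d"
  shows "(M * mat (Suc d) (Suc d) (fC a b c d)) $$ (r,s) = M $$ (r,s) * delta a b c d
     - (M * mat (Suc d) (Suc d) (fA a d)) $$ (r,s) - (M * mat (Suc d) (Suc d) (fB a b c d)) $$ (r,s)"
  unfolding mat_mult_right[OF assms] using assms
  by (simp add: fC_def sum_subtractf right_diff_distrib if_distrib[of "\<lambda>x. _ * x"] sum.delta del: sum.lessThan_Suc)


context
  fixes a b c :: "'a::field" and d :: nat
begin

definition thI :: "'a \<Rightarrow> int \<Rightarrow> 'a" where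
  "thI x i = (x + of_nat d / 2 - of_int i) * (x + of_nat d / 2 - of_int i + 1)"
definition phI :: "int \<Rightarrow> 'a" where
  "phI i = of_int i * (of_int i - of_nat d - 1) * (a + b + c + of_nat d / 2 - of_int i + 2)
      * (a + b - c + of_nat d / 2 - of_int i + 1)"

definition eI :: "int \<times> int \<Rightarrow> 'a" where "eI = (\<lambda>(r,k). if k = 0 then 1 else 0)"
definition LA :: "(int \<times> int \<Rightarrow> 'a) \<Rightarrow> int \<times> int \<Rightarrow> 'a" where
  "LA g = (\<lambda>(r,k). thI a r * g (r,k) + g (r - 1, k + 1))"
definition LB :: "(int \<times> int \<Rightarrow> 'a) \<Rightarrow> int \<times> int \<Rightarrow> 'a" where
  "LB g = (\<lambda>(r,k). thI b r * g (r,k) + phI (r + 1) * g (r + 1, k - 1))"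
definition RA :: "(int \<times> int \<Rightarrow> 'a) \<Rightarrow> int \<times> int \<Rightarrow> 'a" where
  "RA g = (\<lambda>(r,k). g (r,k) * thI a (r + k) + g (r, k + 1))"
definition RB :: "(int \<times> int \<Rightarrow> 'a) \<Rightarrow> int \<times> int \<Rightarrow> 'a" where
  "RB g = (\<lambda>(r,k). g (r,k) * thI b (r + k) + phI (r + k) * g (r, k - 1))"

definition "de = delta a b c d"
definition "gC = (\<lambda>x. de * eI x - LA eI x - LB eI x)"
definition "gD = (\<lambda>x. (LA (LB eI) x - LB (LA eI) x) / 2)"

lemma ptwise_alpha:
  assumes two: "(2::'a) \<noteq> 0"
  shows "LA gD x - RA gD x + LA gC x - LB (LA eI) x = (c - b) * (c + b + 1) * (a - of_nat d / 2) * (a + of_nat d / 2 + 1) * eI x"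
proof -
  obtain r k where x: "x = (r, k)" by fastforce
  define t where "t = inverse (2::'a)"
  have t2: "2 * t = 1" using two by (simp add: t_def)
  have half: "\<And>y::'a. y / 2 = y * t" unfolding t_def by (rule divide_inverse)
  consider "k = -2" | "k = -1" | "k = 0" | "k = 1" | "k = 2" | "k \<le> -3" | "k \<ge> 3" by linarith
  then show ?thesis
  proof cases
   case 1 show ?thesis unfolding x 1 gD_def gC_def LA_def LB_def RA_def RB_def eI_def
      by (simp add: two; simp only: thI_def phI_def de_def delta_def half of_int_add of_int_diff of_int_1 of_int_numeral of_int_minus;
          (Groebner_Basis.algebra | (insert t2, Groebner_Basis.algebra)))
  next case 2 show ?thesis unfolding x 2 gD_def gC_def LA_def LB_def RA_def RB_def eI_def
      by (simp add: two; simp only: thI_def phI_def de_def delta_def half of_int_add of_int_diff of_int_1 of_int_numeral of_int_minus;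
          (Groebner_Basis.algebra | (insert t2, Groebner_Basis.algebra)))
  next case 3 show ?thesis unfolding x 3 gD_def gC_def LA_def LB_def RA_def RB_def eI_def
      by (simp add: two; simp only: thI_def phI_def de_def delta_def half of_int_add of_int_diff of_int_1 of_int_numeral of_int_minus;
          (Groebner_Basis.algebra | (insert t2, Groebner_Basis.algebra)))
  next case 4 show ?thesis unfolding x 4 gD_def gC_def LA_def LB_def RA_def RB_def eI_def
      by (simp add: two; simp only: thI_def phI_def de_def delta_def half of_int_add of_int_diff of_int_1 of_int_numeral of_int_minus;
          (Groebner_Basis.algebra | (insert t2, Groebner_Basis.algebra)))
  next case 5 show ?thesis unfolding x 5 gD_def gC_def LA_def LB_def RA_def RB_def eI_def
      by (simp add: two; simp only: thI_def phI_def de_def delta_def half of_int_add of_int_diff of_int_1 of_int_numeral of_int_minus;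
          (Groebner_Basis.algebra | (insert t2, Groebner_Basis.algebra)))
  next case 6 thus ?thesis unfolding x gD_def gC_def LA_def LB_def RA_def RB_def eI_def by simp
  next case 7 thus ?thesis unfolding x gD_def gC_def LA_def LB_def RA_def RB_def eI_def by simp
  qed
qed

lemma ptwise_beta:
  assumes two: "(2::'a) \<noteq> 0"
  shows "LB gD x - RB gD x + LB (LA eI) x - (de * LB eI x - LA (LB eI) x - LB (LB eI) x) = (a - c) * (a + c + 1) * (b - of_nat d / 2) * (b + of_nat d / 2 + 1) * eI x"
proof -
  obtain r k where x: "x = (r, k)" by fastforce
  define t where "t = inverse (2::'a)"
  have t2: "2 * t = 1" using two by (simp add: t_def)
  have half: "\<And>y::'a. y / 2 = y * t" unfolding t_def by (rule divide_inverse)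
  consider "k = -2" | "k = -1" | "k = 0" | "k = 1" | "k = 2" | "k \<le> -3" | "k \<ge> 3" by linarith
  then show ?thesis
  proof cases
   case 1 show ?thesis unfolding x 1 gD_def gC_def LA_def LB_def RA_def RB_def eI_def
      by (simp add: two; simp only: thI_def phI_def de_def delta_def half of_int_add of_int_diff of_int_1 of_int_numeral of_int_minus;
          (Groebner_Basis.algebra | (insert t2, Groebner_Basis.algebra)))
  next case 2 show ?thesis unfolding x 2 gD_def gC_def LA_def LB_def RA_def RB_def eI_def
      by (simp add: two; simp only: thI_def phI_def de_def delta_def half of_int_add of_int_diff of_int_1 of_int_numeral of_int_minus;
          (Groebner_Basis.algebra | (insert t2, Groebner_Basis.algebra)))
  next case 3 show ?thesis unfolding x 3 gD_def gC_def LA_def LB_def RA_def RB_def eI_def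
      by (simp add: two; simp only: thI_def phI_def de_def delta_def half of_int_add of_int_diff of_int_1 of_int_numeral of_int_minus;
          (Groebner_Basis.algebra | (insert t2, Groebner_Basis.algebra)))
  next case 4 show ?thesis unfolding x 4 gD_def gC_def LA_def LB_def RA_def RB_def eI_def
      by (simp add: two; simp only: thI_def phI_def de_def delta_def half of_int_add of_int_diff of_int_1 of_int_numeral of_int_minus;
          (Groebner_Basis.algebra | (insert t2, Groebner_Basis.algebra)))
  next case 5 show ?thesis unfolding x 5 gD_def gC_def LA_def LB_def RA_def RB_def eI_def
      by (simp add: two; simp only: thI_def phI_def de_def delta_def half of_int_add of_int_diff of_int_1 of_int_numeral of_int_minus;
          (Groebner_Basis.algebra | (insert t2, Groebner_Basis.algebra)))
  next case 6 thus ?thesis unfolding x gD_def gC_def LA_def LB_def RA_def RB_def eI_def by simp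
  next case 7 thus ?thesis unfolding x gD_def gC_def LA_def LB_def RA_def RB_def eI_def by simp
  qed
qed

lemma ptwise_gamma:
  assumes two: "(2::'a) \<noteq> 0"
  shows "(de * gD x - LA gD x - LB gD x) - (gD x * de - RA gD x - RB gD x) + (de * LB eI x - LA (LB eI) x - LB (LB eI) x) - LA gC x = (- ((c - b) * (c + b + 1) * (a - of_nat d / 2) * (a + of_nat d / 2 + 1) + (a - c) * (a + c + 1) * (b - of_nat d / 2) * (b + of_nat d / 2 + 1))) * eI x"
proof -
  obtain r k where x: "x = (r, k)" by fastforce
  define t where "t = inverse (2::'a)"
  have t2: "2 * t = 1" using two by (simp add: t_def)
  have half: "\<And>y::'a. y / 2 = y * t" unfolding t_def by (rule divide_inverse)
  consider "k = -2" | "k = -1" | "k = 0" | "k = 1" | "k = 2" | "k \<le> -3" | "k \<ge> 3" by linarith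
  then show ?thesis
  proof cases
   case 1 show ?thesis unfolding x 1 gD_def gC_def LA_def LB_def RA_def RB_def eI_def
      by (simp add: two; simp only: thI_def phI_def de_def delta_def half of_int_add of_int_diff of_int_1 of_int_numeral of_int_minus;
          (Groebner_Basis.algebra | (insert t2, Groebner_Basis.algebra)))
  next case 2 show ?thesis unfolding x 2 gD_def gC_def LA_def LB_def RA_def RB_def eI_def
      by (simp add: two; simp only: thI_def phI_def de_def delta_def half of_int_add of_int_diff of_int_1 of_int_numeral of_int_minus;
          (Groebner_Basis.algebra | (insert t2, Groebner_Basis.algebra)))
  next case 3 show ?thesis unfolding x 3 gD_def gC_def LA_def LB_def RA_def RB_def eI_def
      by (simp add: two; simp only: thI_def phI_def de_def delta_def half of_int_add of_int_diff of_int_1 of_int_numeral of_int_minus;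
          (Groebner_Basis.algebra | (insert t2, Groebner_Basis.algebra)))
  next case 4 show ?thesis unfolding x 4 gD_def gC_def LA_def LB_def RA_def RB_def eI_def
      by (simp add: two; simp only: thI_def phI_def de_def delta_def half of_int_add of_int_diff of_int_1 of_int_numeral of_int_minus;
          (Groebner_Basis.algebra | (insert t2, Groebner_Basis.algebra)))
  next case 5 show ?thesis unfolding x 5 gD_def gC_def LA_def LB_def RA_def RB_def eI_def
      by (simp add: two; simp only: thI_def phI_def de_def delta_def half of_int_add of_int_diff of_int_1 of_int_numeral of_int_minus;
          (Groebner_Basis.algebra | (insert t2, Groebner_Basis.algebra)))
  next case 6 thus ?thesis unfolding x gD_def gC_def LA_def LB_def RA_def RB_def eI_def by simp
  next case 7 thus ?thesis unfolding x gD_def gC_def LA_def LB_def RA_def RB_def eI_def by simp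
  qed
qed

lemma ptwise_BC:
  assumes two: "(2::'a) \<noteq> 0"
  shows "LB gC x - (de * LB eI x - LA (LB eI) x - LB (LB eI) x) = 2 * gD x"
proof -
  obtain r k where x: "x = (r, k)" by fastforce
  define t where "t = inverse (2::'a)"
  have t2: "2 * t = 1" using two by (simp add: t_def)
  have half: "\<And>y::'a. y / 2 = y * t" unfolding t_def by (rule divide_inverse)
  consider "k = -2" | "k = -1" | "k = 0" | "k = 1" | "k = 2" | "k \<le> -3" | "k \<ge> 3" by linarith
  then show ?thesis
  proof cases
   case 1 show ?thesis unfolding x 1 gD_def gC_def LA_def LB_def RA_def RB_def eI_def
      by (simp add: two; simp only: thI_def phI_def de_def delta_def half of_int_add of_int_diff of_int_1 of_int_numeral of_int_minus;
          (Groebner_Basis.algebra | (insert t2, Groebner_Basis.algebra)))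
  next case 2 show ?thesis unfolding x 2 gD_def gC_def LA_def LB_def RA_def RB_def eI_def
      by (simp add: two; simp only: thI_def phI_def de_def delta_def half of_int_add of_int_diff of_int_1 of_int_numeral of_int_minus;
          (Groebner_Basis.algebra | (insert t2, Groebner_Basis.algebra)))
  next case 3 show ?thesis unfolding x 3 gD_def gC_def LA_def LB_def RA_def RB_def eI_def
      by (simp add: two; simp only: thI_def phI_def de_def delta_def half of_int_add of_int_diff of_int_1 of_int_numeral of_int_minus;
          (Groebner_Basis.algebra | (insert t2, Groebner_Basis.algebra)))
  next case 4 show ?thesis unfolding x 4 gD_def gC_def LA_def LB_def RA_def RB_def eI_def
      by (simp add: two; simp only: thI_def phI_def de_def delta_def half of_int_add of_int_diff of_int_1 of_int_numeral of_int_minus;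
          (Groebner_Basis.algebra | (insert t2, Groebner_Basis.algebra)))
  next case 5 show ?thesis unfolding x 5 gD_def gC_def LA_def LB_def RA_def RB_def eI_def
      by (simp add: two; simp only: thI_def phI_def de_def delta_def half of_int_add of_int_diff of_int_1 of_int_numeral of_int_minus;
          (Groebner_Basis.algebra | (insert t2, Groebner_Basis.algebra)))
  next case 6 thus ?thesis unfolding x gD_def gC_def LA_def LB_def RA_def RB_def eI_def by simp
  next case 7 thus ?thesis unfolding x gD_def gC_def LA_def LB_def RA_def RB_def eI_def by simp
  qed
qed

lemma ptwise_CA:
  assumes two: "(2::'a) \<noteq> 0"
  shows "(de * LA eI x - LA (LA eI) x - LB (LA eI) x) - LA gC x = 2 * gD x"
proof -
  obtain r k where x: "x = (r, k)" by fastforce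
  define t where "t = inverse (2::'a)"
  have t2: "2 * t = 1" using two by (simp add: t_def)
  have half: "\<And>y::'a. y / 2 = y * t" unfolding t_def by (rule divide_inverse)
  consider "k = -2" | "k = -1" | "k = 0" | "k = 1" | "k = 2" | "k \<le> -3" | "k \<ge> 3" by linarith
  then show ?thesis
  proof cases
   case 1 show ?thesis unfolding x 1 gD_def gC_def LA_def LB_def RA_def RB_def eI_def
      by (simp add: two; simp only: thI_def phI_def de_def delta_def half of_int_add of_int_diff of_int_1 of_int_numeral of_int_minus;
          (Groebner_Basis.algebra | (insert t2, Groebner_Basis.algebra)))
  next case 2 show ?thesis unfolding x 2 gD_def gC_def LA_def LB_def RA_def RB_def eI_def
      by (simp add: two; simp only: thI_def phI_def de_def delta_def half of_int_add of_int_diff of_int_1 of_int_numeral of_int_minus;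
          (Groebner_Basis.algebra | (insert t2, Groebner_Basis.algebra)))
  next case 3 show ?thesis unfolding x 3 gD_def gC_def LA_def LB_def RA_def RB_def eI_def
      by (simp add: two; simp only: thI_def phI_def de_def delta_def half of_int_add of_int_diff of_int_1 of_int_numeral of_int_minus;
          (Groebner_Basis.algebra | (insert t2, Groebner_Basis.algebra)))
  next case 4 show ?thesis unfolding x 4 gD_def gC_def LA_def LB_def RA_def RB_def eI_def
      by (simp add: two; simp only: thI_def phI_def de_def delta_def half of_int_add of_int_diff of_int_1 of_int_numeral of_int_minus;
          (Groebner_Basis.algebra | (insert t2, Groebner_Basis.algebra)))
  next case 5 show ?thesis unfolding x 5 gD_def gC_def LA_def LB_def RA_def RB_def eI_def
      by (simp add: two; simp only: thI_def phI_def de_def delta_def half of_int_add of_int_diff of_int_1 of_int_numeral of_int_minus;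
          (Groebner_Basis.algebra | (insert t2, Groebner_Basis.algebra)))
  next case 6 thus ?thesis unfolding x gD_def gC_def LA_def LB_def RA_def RB_def eI_def by simp
  next case 7 thus ?thesis unfolding x gD_def gC_def LA_def LB_def RA_def RB_def eI_def by simp
  qed
qed


definition toM :: "(int \<times> int \<Rightarrow> 'a) \<Rightarrow> 'a mat" where
  "toM g = mat (Suc d) (Suc d) (\<lambda>(i,j). g (int i, int j - int i))"
definition LL :: "(int \<times> int \<Rightarrow> 'a) \<Rightarrow> bool" where
  "LL g \<longleftrightarrow> (\<forall>r k. r < 0 \<longrightarrow> 0 \<le> r + k \<longrightarrow> g (r,k) = 0)"
definition UR :: "(int \<times> int \<Rightarrow> 'a) \<Rightarrow> bool" where
  "UR g \<longleftrightarrow> (\<forall>r k. r \<le> int d \<longrightarrow> int d < r + k \<longrightarrow> g (r,k) = 0)"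

lemma LLD: "LL g \<Longrightarrow> r < 0 \<Longrightarrow> 0 \<le> r + k \<Longrightarrow> g (r,k) = 0"
  unfolding LL_def by blast
lemma URD: "UR g \<Longrightarrow> r \<le> int d \<Longrightarrow> int d < r + k \<Longrightarrow> g (r,k) = 0"
  unfolding UR_def by blast

lemma phI_0: "phI 0 = 0" by (simp add: phI_def)
lemma phI_d1: "phI (int d + 1) = 0" by (simp add: phI_def)

lemma LL_eI: "LL eI" by (auto simp: LL_def eI_def)
lemma UR_eI: "UR eI" by (auto simp: UR_def eI_def)

lemma LL_LA: assumes "LL g" shows "LL (LA g)"
  unfolding LL_def LA_def
proof (intro allI impI, simp)
  fix r k :: int assume "r < 0" "0 \<le> r + k"
  then show "thI a r * g (r, k) + g (r - 1, k + 1) = 0"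
    using LLD[OF assms, of r k] LLD[OF assms, of "r - 1" "k + 1"] by simp
qed

lemma LL_LB: assumes "LL g" shows "LL (LB g)"
  unfolding LL_def LB_def
proof (intro allI impI, simp)
  fix r k :: int assume h: "r < 0" "0 \<le> r + k"
  show "thI b r * g (r, k) + phI (r + 1) * g (r + 1, k - 1) = 0"
  proof (cases "r = -1")
    case True thus ?thesis using LLD[OF assms, of r k] h by (simp add: phI_0)
  next
    case False thus ?thesis using LLD[OF assms, of r k] LLD[OF assms, of "r + 1" "k - 1"] h by simp
  qed
qed

lemma LL_RA: assumes "LL g" shows "LL (RA g)"
  unfolding LL_def RA_def
proof (intro allI impI, simp)
  fix r k :: int assume "r < 0" "0 \<le> r + k"
  then show "g (r, k) * thI a (r + k) + g (r, k + 1) = 0"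
    using LLD[OF assms, of r k] LLD[OF assms, of r "k + 1"] by simp
qed

lemma LL_RB: assumes "LL g" shows "LL (RB g)"
  unfolding LL_def RB_def
proof (intro allI impI, simp)
  fix r k :: int assume h: "r < 0" "0 \<le> r + k"
  show "g (r, k) * thI b (r + k) + phI (r + k) * g (r, k - 1) = 0"
  proof (cases "r + k = 0")
    case True thus ?thesis using LLD[OF assms, of r k] h by (simp add: phI_0)
  next
    case False thus ?thesis using LLD[OF assms, of r k] LLD[OF assms, of r "k - 1"] h by simp
  qed
qed

lemma UR_LA: assumes "UR g" shows "UR (LA g)"
  unfolding UR_def LA_def
proof (intro allI impI, simp)
  fix r k :: int assume "r \<le> int d" "int d < r + k"
  then show "thI a r * g (r, k) + g (r - 1, k + 1) = 0"
    using URD[OF assms, of r k] URD[OF assms, of "r - 1" "k + 1"] by simp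
qed

lemma UR_LB: assumes "UR g" shows "UR (LB g)"
  unfolding UR_def LB_def
proof (intro allI impI, simp)
  fix r k :: int assume h: "r \<le> int d" "int d < r + k"
  show "thI b r * g (r, k) + phI (r + 1) * g (r + 1, k - 1) = 0"
  proof (cases "r = int d")
    case True thus ?thesis using URD[OF assms, of r k] h by (simp add: phI_d1)
  next
    case False thus ?thesis using URD[OF assms, of r k] URD[OF assms, of "r + 1" "k - 1"] h by simp
  qed
qed

lemma UR_RA: assumes "UR g" shows "UR (RA g)"
  unfolding UR_def RA_def
proof (intro allI impI, simp)
  fix r k :: int assume "r \<le> int d" "int d < r + k"
  then show "g (r, k) * thI a (r + k) + g (r, k + 1) = 0"
    using URD[OF assms, of r k] URD[OF assms, of r "k + 1"] by simp
qed

lemma UR_RB: assumes "UR g" shows "UR (RB g)"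
  unfolding UR_def RB_def
proof (intro allI impI, simp)
  fix r k :: int assume h: "r \<le> int d" "int d < r + k"
  show "g (r, k) * thI b (r + k) + phI (r + k) * g (r, k - 1) = 0"
  proof (cases "r + k = int d + 1")
    case True thus ?thesis using URD[OF assms, of r k] h by (simp add: phI_d1)
  next
    case False thus ?thesis using URD[OF assms, of r k] URD[OF assms, of r "k - 1"] h by simp
  qed
qed

lemma LL_gC: "LL gC"
  unfolding LL_def gC_def
  using LLD[OF LL_eI] LLD[OF LL_LA[OF LL_eI]] LLD[OF LL_LB[OF LL_eI]] by simp
lemma UR_gC: "UR gC"
  unfolding UR_def gC_def
  using URD[OF UR_eI] URD[OF UR_LA[OF UR_eI]] URD[OF UR_LB[OF UR_eI]] by simp
lemma LL_gD: "LL gD"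
  unfolding LL_def gD_def
  using LLD[OF LL_LA[OF LL_LB[OF LL_eI]]] LLD[OF LL_LB[OF LL_LA[OF LL_eI]]] by simp
lemma UR_gD: "UR gD"
  unfolding UR_def gD_def
  using URD[OF UR_LA[OF UR_LB[OF UR_eI]]] URD[OF UR_LB[OF UR_LA[OF UR_eI]]] by simp

lemma toM_carrier[simp]: "toM g \<in> carrier_mat (Suc d) (Suc d)" by (simp add: toM_def)
lemma toM_index: "i < Suc d \<Longrightarrow> j < Suc d \<Longrightarrow> toM g $$ (i,j) = g (int i, int j - int i)"
  by (simp add: toM_def)
lemma toM_cong: "(\<And>x. f x = g x) \<Longrightarrow> toM f = toM g" by (simp add: toM_def)
lemma toM_plus: "toM f + toM g = toM (\<lambda>x. f x + g x)" by (rule eq_matI) (auto simp: toM_def)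
lemma toM_minus: "toM f - toM g = toM (\<lambda>x. f x - g x)" by (rule eq_matI) (auto simp: toM_def)
lemma toM_smult: "k \<cdot>\<^sub>m toM f = toM (\<lambda>x. k * f x)" by (rule eq_matI) (auto simp: toM_def)
lemma one_toM: "1\<^sub>m (Suc d) = toM eI" by (rule eq_matI) (auto simp: toM_def eI_def)

lemma A_toM: "mat (Suc d) (Suc d) (fA a d) = toM (LA eI)"
  by (rule eq_matI) (auto simp: toM_def fA_def LA_def eI_def theta_def thI_def)
lemma B_toM: "mat (Suc d) (Suc d) (fB a b c d) = toM (LB eI)"
  by (rule eq_matI) (auto simp: toM_def fB_def LB_def eI_def theta_def thI_def phi_def phI_def)
lemma C_toM: "mat (Suc d) (Suc d) (fC a b c d) = toM gC"
  by (rule eq_matI) (auto simp: toM_def fC_def fA_def fB_def gC_def de_def LA_def LB_def eI_def theta_def thI_def phi_def phI_def)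


lemma theta_thI: "theta x d i = thI x (int i)" by (simp add: theta_def thI_def)
lemma phi_phI: "phi a b c d i = phI (int i)" by (simp add: phi_def phI_def)

lemma int_pred: "0 < i \<Longrightarrow> int (i - 1) = int i - 1" by simp

lemma L_A: assumes "LL g" shows "mat (Suc d) (Suc d) (fA a d) * toM g = toM (LA g)"
proof (rule eq_matI)
  fix i j assume ij: "i < dim_row (toM (LA g))" "j < dim_col (toM (LA g))"
  hence i: "i < Suc d" and j: "j < Suc d" by (auto simp: toM_def)
  show "(mat (Suc d) (Suc d) (fA a d) * toM g) $$ (i, j) = toM (LA g) $$ (i, j)"
  proof (cases "i = 0")
    case True thus ?thesis
      using toM_index[OF i j] LLD[OF assms, of "-1" "int j + 1"] by (subst A_left[OF toM_carrier i j], simp add: toM_index[OF i j] LA_def theta_thI del: index_mult_mat(1))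
  next
    case False
    hence "i - 1 < Suc d" using i by simp
    thus ?thesis
      using toM_index[OF i j] toM_index[OF \<open>i - 1 < Suc d\<close> j] False
      by (subst A_left[OF toM_carrier i j], simp add: toM_index[OF i j] LA_def theta_thI int_pred algebra_simps del: index_mult_mat(1))
  qed
qed (auto simp: toM_def)

lemma L_B: "mat (Suc d) (Suc d) (fB a b c d) * toM g = toM (LB g)"
proof (rule eq_matI)
  fix i j assume ij: "i < dim_row (toM (LB g))" "j < dim_col (toM (LB g))"
  hence i: "i < Suc d" and j: "j < Suc d" by (auto simp: toM_def)
  show "(mat (Suc d) (Suc d) (fB a b c d) * toM g) $$ (i, j) = toM (LB g) $$ (i, j)"
  proof (cases "i < d")
    case False
    hence "int i = int d" using i by simp
    thus ?thesis
      using toM_index[OF i j] False by (subst B_left[OF toM_carrier i j], simp add: toM_index[OF i j] LB_def theta_thI phI_d1 del: index_mult_mat(1))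
  next
    case True
    hence "Suc i < Suc d" by simp
    thus ?thesis
      using toM_index[OF i j] toM_index[OF \<open>Suc i < Suc d\<close> j] True
      by (subst B_left[OF toM_carrier i j], simp add: toM_index[OF i j] LB_def theta_thI phi_phI algebra_simps del: index_mult_mat(1))
  qed
qed (auto simp: toM_def)

lemma R_A: assumes "UR g" shows "toM g * mat (Suc d) (Suc d) (fA a d) = toM (RA g)"
proof (rule eq_matI)
  fix i j assume ij: "i < dim_row (toM (RA g))" "j < dim_col (toM (RA g))"
  hence i: "i < Suc d" and j: "j < Suc d" by (auto simp: toM_def)
  show "(toM g * mat (Suc d) (Suc d) (fA a d)) $$ (i, j) = toM (RA g) $$ (i, j)"
  proof (cases "j < d")
    case False
    hence "int j = int d" using j by simp
    thus ?thesis
      using toM_index[OF i j] False URD[OF assms, of "int i" "int j - int i + 1"] i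
      by (subst A_right[OF toM_carrier i j], simp add: toM_index[OF i j] RA_def theta_thI del: index_mult_mat(1))
  next
    case True
    hence "Suc j < Suc d" by simp
    thus ?thesis
      using toM_index[OF i j] toM_index[OF i \<open>Suc j < Suc d\<close>] True
      by (subst A_right[OF toM_carrier i j], simp add: toM_index[OF i j] RA_def theta_thI algebra_simps del: index_mult_mat(1))
  qed
qed (auto simp: toM_def)

lemma R_B: "toM g * mat (Suc d) (Suc d) (fB a b c d) = toM (RB g)"
proof (rule eq_matI)
  fix i j assume ij: "i < dim_row (toM (RB g))" "j < dim_col (toM (RB g))"
  hence i: "i < Suc d" and j: "j < Suc d" by (auto simp: toM_def)
  show "(toM g * mat (Suc d) (Suc d) (fB a b c d)) $$ (i, j) = toM (RB g) $$ (i, j)"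
  proof (cases "j = 0")
    case True
    thus ?thesis
      using toM_index[OF i j] by (subst B_right[OF toM_carrier i j], simp add: toM_index[OF i j] RB_def theta_thI phI_0 del: index_mult_mat(1))
  next
    case False
    hence "j - 1 < Suc d" using j by simp
    thus ?thesis
      using toM_index[OF i j] toM_index[OF i \<open>j - 1 < Suc d\<close>] False
      by (subst B_right[OF toM_carrier i j], simp add: toM_index[OF i j] RB_def theta_thI phi_phI int_pred algebra_simps del: index_mult_mat(1))
  qed
qed (auto simp: toM_def)

lemma L_C: assumes "LL g"
  shows "mat (Suc d) (Suc d) (fC a b c d) * toM g = toM (\<lambda>x. de * g x - LA g x - LB g x)"
proof (rule eq_matI)
  fix i j assume ij: "i < dim_row (toM (\<lambda>x. de * g x - LA g x - LB g x))" "j < dim_col (toM (\<lambda>x. de * g x - LA g x - LB g x))"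
  hence i: "i < Suc d" and j: "j < Suc d" by (auto simp: toM_def)
  show "(mat (Suc d) (Suc d) (fC a b c d) * toM g) $$ (i, j) = toM (\<lambda>x. de * g x - LA g x - LB g x) $$ (i, j)"
    unfolding C_left[OF toM_carrier i j] L_A[OF assms] L_B
    using i j by (simp add: toM_def de_def)
qed (auto simp: toM_def)

lemma R_C: assumes "UR g"
  shows "toM g * mat (Suc d) (Suc d) (fC a b c d) = toM (\<lambda>x. g x * de - RA g x - RB g x)"
proof (rule eq_matI)
  fix i j assume ij: "i < dim_row (toM (\<lambda>x. g x * de - RA g x - RB g x))" "j < dim_col (toM (\<lambda>x. g x * de - RA g x - RB g x))"
  hence i: "i < Suc d" and j: "j < Suc d" by (auto simp: toM_def)
  show "(toM g * mat (Suc d) (Suc d) (fC a b c d)) $$ (i, j) = toM (\<lambda>x. g x * de - RA g x - RB g x) $$ (i, j)"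
    unfolding C_right[OF toM_carrier i j] R_A[OF assms] R_B
    using i j by (simp add: toM_def de_def)
qed (auto simp: toM_def)


lemma mult_unit: fixes M :: "'a mat" assumes "M \<in> carrier_mat n n" "i < n" "j < n"
  shows "(M *\<^sub>v unit_vec n i) $ j = M $$ (j,i)"
proof -
  have "(M *\<^sub>v unit_vec n i) $ j = (\<Sum>k\<in>{0..<n}. M $$ (j,k) * (if k = i then 1 else 0))"
    using assms by (simp add: scalar_prod_def)
  also have "\<dots> = M $$ (j,i)" using assms by (simp add: if_distrib[of "\<lambda>x. _ * x"] sum.delta' cong: if_cong)
  finally show ?thesis .
qed

lemma A_vec: assumes "i \<le> d"
  shows "mat (Suc d) (Suc d) (fA a d) *\<^sub>v unit_vec (Suc d) i =
        theta a d i \<cdot>\<^sub>v unit_vec (Suc d) i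
        + (if i < d then unit_vec (Suc d) (i + 1) else 0\<^sub>v (Suc d))"
proof (rule eq_vecI)
  fix j assume "j < dim_vec (theta a d i \<cdot>\<^sub>v unit_vec (Suc d) i
        + (if i < d then unit_vec (Suc d) (i + 1) else 0\<^sub>v (Suc d)))"
  hence j: "j < Suc d" by (simp split: if_splits)
  have i: "i < Suc d" using assms by simp
  show "(mat (Suc d) (Suc d) (fA a d) *\<^sub>v unit_vec (Suc d) i) $ j = (theta a d i \<cdot>\<^sub>v unit_vec (Suc d) i
        + (if i < d then unit_vec (Suc d) (i + 1) else 0\<^sub>v (Suc d))) $ j"
    unfolding mult_unit[OF mat_carrier i j] using i j by (auto simp: fA_def)
qed (simp split: if_splits)

lemma B_vec: assumes "i \<le> d"
  shows "mat (Suc d) (Suc d) (fB a b c d) *\<^sub>v unit_vec (Suc d) i =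
        theta b d i \<cdot>\<^sub>v unit_vec (Suc d) i
        + (if 0 < i then phi a b c d i \<cdot>\<^sub>v unit_vec (Suc d) (i - 1) else 0\<^sub>v (Suc d))"
proof (rule eq_vecI)
  fix j assume "j < dim_vec (theta b d i \<cdot>\<^sub>v unit_vec (Suc d) i
        + (if 0 < i then phi a b c d i \<cdot>\<^sub>v unit_vec (Suc d) (i - 1) else 0\<^sub>v (Suc d)))"
  hence j: "j < Suc d" by (simp split: if_splits)
  have i: "i < Suc d" using assms by simp
  show "(mat (Suc d) (Suc d) (fB a b c d) *\<^sub>v unit_vec (Suc d) i) $ j = (theta b d i \<cdot>\<^sub>v unit_vec (Suc d) i
        + (if 0 < i then phi a b c d i \<cdot>\<^sub>v unit_vec (Suc d) (i - 1) else 0\<^sub>v (Suc d))) $ j"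
    unfolding mult_unit[OF mat_carrier i j] using i j by (auto simp: fB_def)
qed (simp split: if_splits)

lemma scal_comm: "(X :: 'a mat) \<in> carrier_mat n n \<Longrightarrow> (z \<cdot>\<^sub>m 1\<^sub>m n) * X = X * (z \<cdot>\<^sub>m 1\<^sub>m n)"
proof -
  assume X: "X \<in> carrier_mat n n"
  have "(z \<cdot>\<^sub>m 1\<^sub>m n) * X = z \<cdot>\<^sub>m (1\<^sub>m n * X)"
    using X by (simp add: mult_smult_assoc_mat[of "1\<^sub>m n" n n X n])
  also have "\<dots> = z \<cdot>\<^sub>m (X * 1\<^sub>m n)" using X by simp
  also have "\<dots> = X * (z \<cdot>\<^sub>m 1\<^sub>m n)"
    using X by (simp add: mult_smult_distrib[of X n n "1\<^sub>m n" n])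
  finally show ?thesis .
qed

lemma main:
  assumes two: "(2::'a) \<noteq> 0"
  shows "\<exists>A B C D :: 'a mat.
    racah_module (d + 1) A B C D \<and>
    (\<forall>i \<le> d. A *\<^sub>v unit_vec (d + 1) i =
        theta a d i \<cdot>\<^sub>v unit_vec (d + 1) i
        + (if i < d then unit_vec (d + 1) (i + 1) else 0\<^sub>v (d + 1))) \<and>
    (\<forall>i \<le> d. B *\<^sub>v unit_vec (d + 1) i =
        theta b d i \<cdot>\<^sub>v unit_vec (d + 1) i
        + (if 0 < i then phi a b c d i \<cdot>\<^sub>v unit_vec (d + 1) (i - 1) else 0\<^sub>v (d + 1))) \<and>
    racah_alpha A B C D = ((c - b) * (c + b + 1) * (a - of_nat d / 2) * (a + of_nat d / 2 + 1))
        \<cdot>\<^sub>m 1\<^sub>m (d + 1) \<and>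
    racah_beta A B C D = ((a - c) * (a + c + 1) * (b - of_nat d / 2) * (b + of_nat d / 2 + 1))
        \<cdot>\<^sub>m 1\<^sub>m (d + 1) \<and>
    A + B + C = (of_nat d / 2 * (of_nat d / 2 + 1) + a * (a + 1) + b * (b + 1) + c * (c + 1))
        \<cdot>\<^sub>m 1\<^sub>m (d + 1)"
proof -
  define A where "A = mat (Suc d) (Suc d) (fA a d)"
  define B where "B = mat (Suc d) (Suc d) (fB a b c d)"
  define C where "C = mat (Suc d) (Suc d) (fC a b c d)"
  define D where "D = toM gD"
  have n: "d + 1 = Suc d" by simp
  have AB: "A * B = toM (LA (LB eI))" unfolding A_def B_def B_toM by (rule L_A[OF LL_LB[OF LL_eI]])
  have BA: "B * A = toM (LB (LA eI))" unfolding A_def B_def A_toM by (rule L_B)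
  have BC: "B * C = toM (LB gC)" unfolding C_def B_def C_toM by (rule L_B)
  have CB: "C * B = toM (\<lambda>x. de * LB eI x - LA (LB eI) x - LB (LB eI) x)"
    unfolding C_def B_def B_toM by (rule L_C[OF LL_LB[OF LL_eI]])
  have CA: "C * A = toM (\<lambda>x. de * LA eI x - LA (LA eI) x - LB (LA eI) x)"
    unfolding C_def A_def A_toM by (rule L_C[OF LL_LA[OF LL_eI]])
  have AC: "A * C = toM (LA gC)" unfolding A_def C_def C_toM by (rule L_A[OF LL_gC])
  have AD: "A * D = toM (LA gD)" unfolding A_def D_def by (rule L_A[OF LL_gD])
  have DA: "D * A = toM (RA gD)" unfolding A_def D_def by (rule R_A[OF UR_gD])
  have BD: "B * D = toM (LB gD)" unfolding B_def D_def by (rule L_B)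
  have DB: "D * B = toM (RB gD)" unfolding B_def D_def by (rule R_B)
  have CD: "C * D = toM (\<lambda>x. de * gD x - LA gD x - LB gD x)" unfolding C_def D_def by (rule L_C[OF LL_gD])
  have DC: "D * C = toM (\<lambda>x. gD x * de - RA gD x - RB gD x)" unfolding C_def D_def by (rule R_C[OF UR_gD])
  have D2: "\<And>x. LA (LB eI) x - LB (LA eI) x = 2 * gD x" using two by (simp add: gD_def)
  have cAB: "mcomm A B = 2 \<cdot>\<^sub>m D" unfolding mcomm_def AB BA toM_minus D_def toM_smult
    by (rule toM_cong) (rule D2)
  have cBC: "mcomm B C = 2 \<cdot>\<^sub>m D" unfolding mcomm_def BC CB toM_minus D_def toM_smult
    by (rule toM_cong) (rule ptwise_BC[OF two])
  have cCA: "mcomm C A = 2 \<cdot>\<^sub>m D" unfolding mcomm_def CA AC toM_minus D_def toM_smult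
    by (rule toM_cong) (rule ptwise_CA[OF two])
  have al: "racah_alpha A B C D = ((c - b) * (c + b + 1) * (a - of_nat d / 2) * (a + of_nat d / 2 + 1)) \<cdot>\<^sub>m 1\<^sub>m (Suc d)"
    unfolding racah_alpha_def mcomm_def AD DA AC BA toM_minus toM_plus one_toM toM_smult
    by (rule toM_cong) (rule ptwise_alpha[OF two])
  have be: "racah_beta A B C D = ((a - c) * (a + c + 1) * (b - of_nat d / 2) * (b + of_nat d / 2 + 1)) \<cdot>\<^sub>m 1\<^sub>m (Suc d)"
    unfolding racah_beta_def mcomm_def BD DB BA CB toM_minus toM_plus one_toM toM_smult
    by (rule toM_cong) (rule ptwise_beta[OF two])
  have ga: "racah_gamma A B C D = (- ((c - b) * (c + b + 1) * (a - of_nat d / 2) * (a + of_nat d / 2 + 1)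
      + (a - c) * (a + c + 1) * (b - of_nat d / 2) * (b + of_nat d / 2 + 1))) \<cdot>\<^sub>m 1\<^sub>m (Suc d)"
    unfolding racah_gamma_def mcomm_def CD DC CB AC toM_minus toM_plus one_toM toM_smult
    by (rule toM_cong) (rule ptwise_gamma[OF two])
  have dl: "A + B + C = (of_nat d / 2 * (of_nat d / 2 + 1) + a * (a + 1) + b * (b + 1) + c * (c + 1)) \<cdot>\<^sub>m 1\<^sub>m (Suc d)"
    unfolding A_def B_def C_def A_toM B_toM C_toM toM_plus one_toM toM_smult
    by (rule toM_cong) (simp add: gC_def de_def delta_def)
  have car: "A \<in> carrier_mat (Suc d) (Suc d)" "B \<in> carrier_mat (Suc d) (Suc d)"
     "C \<in> carrier_mat (Suc d) (Suc d)" "D \<in> carrier_mat (Suc d) (Suc d)"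
    by (simp_all add: A_def B_def C_def D_def)
  have rm: "racah_module (d + 1) A B C D"
    unfolding racah_module_def n
    using car cAB cBC cCA al be ga by (simp add: scal_comm)
  show ?thesis unfolding n
    apply (rule exI[of _ A], rule exI[of _ B], rule exI[of _ C], rule exI[of _ D])
    using rm al be dl A_vec B_vec unfolding n A_def B_def by simp
qed

end

theorem proposition2p4:
  fixes a b c :: "'a::field" and d :: nat
  assumes "alg_closed_field TYPE('a)"
    and "(2::'a) \<noteq> 0"
  shows "\<exists>A B C D :: 'a mat.
    racah_module (d + 1) A B C D \<and>
    (\<forall>i \<le> d. A *\<^sub>v unit_vec (d + 1) i =
        theta a d i \<cdot>\<^sub>v unit_vec (d + 1) i
        + (if i < d then unit_vec (d + 1) (i + 1) else 0\<^sub>v (d + 1))) \<and>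
    (\<forall>i \<le> d. B *\<^sub>v unit_vec (d + 1) i =
        theta b d i \<cdot>\<^sub>v unit_vec (d + 1) i
        + (if 0 < i then phi a b c d i \<cdot>\<^sub>v unit_vec (d + 1) (i - 1) else 0\<^sub>v (d + 1))) \<and>
    racah_alpha A B C D = ((c - b) * (c + b + 1) * (a - of_nat d / 2) * (a + of_nat d / 2 + 1))
        \<cdot>\<^sub>m 1\<^sub>m (d + 1) \<and>
    racah_beta A B C D = ((a - c) * (a + c + 1) * (b - of_nat d / 2) * (b + of_nat d / 2 + 1))
        \<cdot>\<^sub>m 1\<^sub>m (d + 1) \<and>
    A + B + C = (of_nat d / 2 * (of_nat d / 2 + 1) + a * (a + 1) + b * (b + 1) + c * (c + 1))
        \<cdot>\<^sub>m 1\<^sub>m (d + 1)"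
  using main[OF assms(2)] .

end
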